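(* Let $X_1,\dots,X_n$ be features and $Y$ a target that is not a.s. constant. Then for every $i\in\{1,\dots,n\}$, $\mathrm{FI}(i)\in[0,1]$.
   Context: All random variables are discrete with finite support and defined on a common probability space. For discrete random variables (or random vectors) $X$ and $Y$, define $$\mathrm{UD}(X,Y):=\sum_x p_X(x)\sum_y \bigl|p_{Y\mid X=x}(y)-p_Y(y)\bigr|,$$ and, when $Y$ is not almost surely constant, $\mathrm{Dep}(X,Y):=\mathrm{UD}(X,Y)/\mathrm{UD}(Y,Y)$. Given features $X_1,\dots,X_n$ with index set $\mathcal{F}=\{1,\dots,n\}$ and $S\subseteq\mathcal{F}$, write $X_S=(X_i)_{i\in S}$ ($X_\emptyset$ constant) and $\mathrm{Dep}(S,Y):=\mathrm{Dep}(X_S,Y)$. The Berkelmans–Pries feature importance is $$\mathrm{FI}(i):=\sum_{S\subseteq\mathcal{F}\setminus\{i\}}\frac{|S|!\,(n-|S|-1)!}{n!}\bigl(\mathrm{Dep}(S\cup\{i\},Y)-\mathrm{Dep}(S,Y)\bigr).$$ *)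

theory Defs
  imports "HOL-Probability.Probability"
begin

text \<open>The common probability space is a discrete probability distribution M on outcomes 'w.
  Random variables are functions on outcomes; finite support is an explicit assumption.\<close>

definition pX :: "'w pmf \<Rightarrow> ('w \<Rightarrow> 'a) \<Rightarrow> 'a \<Rightarrow> real" where
  "pX M A x = measure_pmf.prob M (A -` {x})"

definition pcond :: "'w pmf \<Rightarrow> ('w \<Rightarrow> 'b) \<Rightarrow> ('w \<Rightarrow> 'a) \<Rightarrow> 'b \<Rightarrow> 'a \<Rightarrow> real" where
  "pcond M B A y x = measure_pmf.prob M (A -` {x} \<inter> B -` {y}) / measure_pmf.prob M (A -` {x})"

definition supp :: "'w pmf \<Rightarrow> ('w \<Rightarrow> 'a) \<Rightarrow> 'a set" where
  "supp M A = A ` set_pmf M"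

definition UD :: "'w pmf \<Rightarrow> ('w \<Rightarrow> 'a) \<Rightarrow> ('w \<Rightarrow> 'b) \<Rightarrow> real" where
  "UD M A B = (\<Sum>x\<in>supp M A. pX M A x * (\<Sum>y\<in>supp M B. \<bar>pcond M B A y x - pX M B y\<bar>))"

definition Dep :: "'w pmf \<Rightarrow> ('w \<Rightarrow> 'a) \<Rightarrow> ('w \<Rightarrow> 'b) \<Rightarrow> real" where
  "Dep M A B = UD M A B / UD M B B"

definition featvec :: "(nat \<Rightarrow> 'w \<Rightarrow> 'v) \<Rightarrow> nat set \<Rightarrow> 'w \<Rightarrow> (nat \<Rightarrow> 'v)" where
  "featvec X S = (\<lambda>w. restrict (\<lambda>i. X i w) S)"

definition DepS :: "'w pmf \<Rightarrow> (nat \<Rightarrow> 'w \<Rightarrow> 'v) \<Rightarrow> nat set \<Rightarrow> ('w \<Rightarrow> 'y) \<Rightarrow> real" where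
  "DepS M X S Y = Dep M (featvec X S) Y"

definition FI :: "'w pmf \<Rightarrow> nat \<Rightarrow> (nat \<Rightarrow> 'w \<Rightarrow> 'v) \<Rightarrow> ('w \<Rightarrow> 'y) \<Rightarrow> nat \<Rightarrow> real" where
  "FI M n X Y i = (\<Sum>S\<in>Pow ({1..n} - {i}).
     fact (card S) * fact (n - card S - 1) / fact n *
     (DepS M X (S \<union> {i}) Y - DepS M X S Y))"

end

theory Submission
  imports Defs
begin

abbreviation P where "P M E \<equiv> measure_pmf.prob M E"

lemma prob_decomp:
  assumes "finite (supp M A)"
  shows "P M E = (\<Sum>x\<in>supp M A. P M (A -` {x} \<inter> E))"
proof -
  have "P M {w\<in>space (measure_pmf M). w \<in> E} =
     (\<Sum>n\<in>supp M A. P M {w\<in>space (measure_pmf M). A w = n \<and> w \<in> E})"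
    using assms by (intro measure_pmf.prob_sum) (auto simp: supp_def intro!: AE_pmfI)
  then show ?thesis by (simp add: Int_def vimage_def conj_commute)
qed

lemma pX_pos: "x \<in> supp M A \<Longrightarrow> pX M A x > 0"
  unfolding pX_def supp_def
  by (auto simp: measure_pmf_posI)

lemma UD_J: "UD M A B = (\<Sum>x\<in>supp M A. \<Sum>y\<in>supp M B.
    \<bar>P M (A -` {x} \<inter> B -` {y}) - pX M A x * pX M B y\<bar>)"
  unfolding UD_def
proof (intro sum.cong refl)
  fix x assume x: "x \<in> supp M A"
  have pos: "pX M A x > 0" using pX_pos[OF x] .
  have "pX M A x * (\<Sum>y\<in>supp M B. \<bar>pcond M B A y x - pX M B y\<bar>)
      = (\<Sum>y\<in>supp M B. \<bar>pX M A x * pcond M B A y x - pX M A x * pX M B y\<bar>)"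
    using pos by (simp add: sum_distrib_left abs_mult right_diff_distrib[symmetric])
  also have "\<dots> = (\<Sum>y\<in>supp M B. \<bar>P M (A -` {x} \<inter> B -` {y}) - pX M A x * pX M B y\<bar>)"
    using pos by (simp add: pcond_def pX_def)
  finally show "pX M A x * (\<Sum>y\<in>supp M B. \<bar>pcond M B A y x - pX M B y\<bar>) =
    (\<Sum>y\<in>supp M B. \<bar>P M (A -` {x} \<inter> B -` {y}) - pX M A x * pX M B y\<bar>)" .
qed

lemma decomp_fun:
  assumes fin: "finite (supp M A')" and f: "\<And>w. A w = f (A' w)"
  shows "P M (A -` {x} \<inter> E) = (\<Sum>x'\<in>{x'\<in>supp M A'. f x' = x}. P M (A' -` {x'} \<inter> E))"
proof -
  have "P M (A -` {x} \<inter> E) = (\<Sum>x'\<in>supp M A'. P M (A' -` {x'} \<inter> (A -` {x} \<inter> E)))"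
    by (rule prob_decomp[OF fin])
  also have "\<dots> = (\<Sum>x'\<in>supp M A'. if f x' = x then P M (A' -` {x'} \<inter> E) else 0)"
  proof (intro sum.cong refl)
    fix x' show "P M (A' -` {x'} \<inter> (A -` {x} \<inter> E)) = (if f x' = x then P M (A' -` {x'} \<inter> E) else 0)"
    proof (cases "f x' = x")
      case True
      then have "A' -` {x'} \<inter> (A -` {x} \<inter> E) = A' -` {x'} \<inter> E" using f by auto
      then show ?thesis using True by simp
    next
      case False
      then have "A' -` {x'} \<inter> (A -` {x} \<inter> E) = {}" using f by auto
      then show ?thesis using False by simp
    qed
  qed
  also have "\<dots> = (\<Sum>x'\<in>{x'\<in>supp M A'. f x' = x}. P M (A' -` {x'} \<inter> E))"
    by (simp add: sum.inter_filter fin)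
  finally show ?thesis .
qed

lemma supp_comp: "(\<And>w. A w = f (A' w)) \<Longrightarrow> supp M A = f ` supp M A'"
  unfolding supp_def by (auto simp: image_image)

lemma UD_mono:
  assumes fin: "finite (supp M A')" and f: "\<And>w. A w = f (A' w)"
  shows "UD M A B \<le> UD M A' B"
proof -
  define S where "S x = {x'\<in>supp M A'. f x' = x}" for x
  define g where "g x' y = \<bar>P M (A' -` {x'} \<inter> B -` {y}) - pX M A' x' * pX M B y\<bar>" for x' y
  have 1: "\<bar>P M (A -` {x} \<inter> B -` {y}) - pX M A x * pX M B y\<bar> \<le> (\<Sum>x'\<in>S x. g x' y)" for x y
  proof -
    have a: "P M (A -` {x} \<inter> B -` {y}) = (\<Sum>x'\<in>S x. P M (A' -` {x'} \<inter> B -` {y}))"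
      unfolding S_def by (rule decomp_fun[where A=A and f=f, OF fin f])
    have b: "pX M A x = (\<Sum>x'\<in>S x. pX M A' x')"
      using decomp_fun[where A=A and f=f and x=x and E=UNIV, OF fin f] unfolding S_def pX_def by simp
    have "P M (A -` {x} \<inter> B -` {y}) - pX M A x * pX M B y
       = (\<Sum>x'\<in>S x. P M (A' -` {x'} \<inter> B -` {y}) - pX M A' x' * pX M B y)"
      by (simp add: a b sum_subtractf sum_distrib_right)
    then show ?thesis unfolding g_def by (simp add: sum_abs)
  qed
  have "UD M A B \<le> (\<Sum>x\<in>supp M A. \<Sum>y\<in>supp M B. \<Sum>x'\<in>S x. g x' y)"
    unfolding UD_J by (intro sum_mono 1)
  also have "\<dots> = (\<Sum>x\<in>f ` supp M A'. \<Sum>x'\<in>S x. \<Sum>y\<in>supp M B. g x' y)"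
    by (simp add: supp_comp[where A=A and f=f and A'=A' and M=M, OF f] sum.swap[of _ "supp M B"])
  also have "\<dots> = (\<Sum>x'\<in>supp M A'. \<Sum>y\<in>supp M B. g x' y)"
    unfolding S_def by (rule sum.image_gen[OF fin, symmetric])
  also have "\<dots> = UD M A' B" unfolding UD_J g_def ..
  finally show ?thesis .
qed

lemma UD_func_aux:
  assumes g: "\<And>w. B w = g (A w)"
  shows "UD M A B = (\<Sum>x\<in>supp M A. pX M A x *
      (\<Sum>y'\<in>supp M B. \<bar>(if g x = y' then 1 else 0) - pX M B y'\<bar>))"
  unfolding UD_J
proof (intro sum.cong refl)
  fix x
  have J: "P M (A -` {x} \<inter> B -` {y'}) = (if g x = y' then pX M A x else 0)" for y'
  proof (cases "g x = y'")
    case True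
    then have "A -` {x} \<inter> B -` {y'} = A -` {x}" using g by auto
    then show ?thesis using True by (simp add: pX_def)
  next
    case False
    then have "A -` {x} \<inter> B -` {y'} = {}" using g by auto
    then show ?thesis using False by simp
  qed
  have nn: "pX M A x \<ge> 0" by (simp add: pX_def)
  show "(\<Sum>y\<in>supp M B. \<bar>P M (A -` {x} \<inter> B -` {y}) - pX M A x * pX M B y\<bar>) =
    pX M A x * (\<Sum>y'\<in>supp M B. \<bar>(if g x = y' then 1 else 0) - pX M B y'\<bar>)"
    unfolding J sum_distrib_left
  proof (intro sum.cong refl)
    fix y show "\<bar>(if g x = y then pX M A x else 0) - pX M A x * pX M B y\<bar> =
         pX M A x * \<bar>(if g x = y then 1 else 0) - pX M B y\<bar>"
    proof (cases "g x = y")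
      case True
      have "pX M A x - pX M A x * pX M B y = pX M A x * (1 - pX M B y)" by (simp add: algebra_simps)
      then show ?thesis using True nn by (simp add: abs_mult)
    next
      case False
      then show ?thesis using nn by (simp add: abs_mult)
    qed
  qed
qed

lemma UD_func:
  assumes fin: "finite (supp M A)" and g: "\<And>w. B w = g (A w)"
  shows "UD M A B = UD M B B"
proof -
  define c where "c y = (\<Sum>y'\<in>supp M B. \<bar>(if y = y' then 1 else 0) - pX M B y'\<bar>)" for y
  have "UD M A B = (\<Sum>x\<in>supp M A. pX M A x * c (g x))"
    unfolding UD_func_aux[where g=g, OF g] c_def ..
  also have "\<dots> = (\<Sum>y\<in>g ` supp M A. \<Sum>x\<in>{x\<in>supp M A. g x = y}. pX M A x * c (g x))"
    by (rule sum.image_gen[OF fin])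
  also have "\<dots> = (\<Sum>y\<in>supp M B. (\<Sum>x\<in>{x\<in>supp M A. g x = y}. pX M A x) * c y)"
    by (simp add: supp_comp[where A=B and f=g and A'=A and M=M, OF g] sum_distrib_right)
  also have "\<dots> = (\<Sum>y\<in>supp M B. pX M B y * c y)"
    using decomp_fun[where A=B and f=g and E=UNIV, OF fin g] by (simp add: pX_def)
  also have "\<dots> = UD M B B"
    using UD_func_aux[where g="\<lambda>x. x" and A=B and B=B and M=M] unfolding c_def by simp
  finally show ?thesis .
qed

lemma Dep_le1:
  assumes fA: "finite (supp M A)" and fB: "finite (supp M B)"
  shows "Dep M A B \<le> 1"
proof -
  define AB where "AB w = (A w, B w)" for w
  have sub: "supp M AB \<subseteq> supp M A \<times> supp M B" unfolding supp_def AB_def by auto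
  have fin: "finite (supp M AB)" by (rule finite_subset[OF sub]) (simp add: fA fB)
  have "UD M A B \<le> UD M AB B" by (rule UD_mono[where f=fst, OF fin]) (simp add: AB_def)
  also have "\<dots> = UD M B B" by (rule UD_func[where g=snd, OF fin]) (simp add: AB_def)
  finally have "UD M A B \<le> UD M B B" .
  moreover have "UD M A B \<ge> 0" unfolding UD_def
    by (intro sum_nonneg mult_nonneg_nonneg) (auto simp: pX_def)
  ultimately show ?thesis unfolding Dep_def
    by (cases "UD M B B = 0") (auto simp: divide_le_eq_1)
qed

lemma Dep_nonneg: "Dep M A B \<ge> 0"
  unfolding Dep_def UD_def
  by (intro divide_nonneg_nonneg sum_nonneg mult_nonneg_nonneg) (auto simp: pX_def)

lemma Dep_mono:
  assumes fin: "finite (supp M A')" and f: "\<And>w. A w = f (A' w)"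
  shows "Dep M A B \<le> Dep M A' B"
proof -
  have "UD M B B \<ge> 0" unfolding UD_def
    by (intro sum_nonneg mult_nonneg_nonneg) (auto simp: pX_def)
  then show ?thesis unfolding Dep_def by (intro divide_right_mono UD_mono[where f=f, OF fin f])
qed

lemma finite_featvec:
  assumes "S \<subseteq> {1..n}" "\<And>j. j \<in> {1..n} \<Longrightarrow> finite (supp M (X j))"
  shows "finite (supp M (featvec X S))"
proof -
  have "supp M (featvec X S) \<subseteq> PiE S (\<lambda>j. supp M (X j))"
    unfolding supp_def featvec_def by auto
  moreover have "finite (PiE S (\<lambda>j. supp M (X j)))"
    using assms by (intro finite_PiE) (auto intro: finite_subset)
  ultimately show ?thesis by (rule finite_subset)
qed

lemma weights_sum:
  fixes n m :: nat and F :: "nat set"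
  assumes fin: "finite F" and c: "card F = m" and n: "n = Suc m"
  shows "(\<Sum>S\<in>Pow F. fact (card S) * fact (n - card S - 1) / fact n) = (1::real)"
proof -
  define h where "h k = fact k * fact (n - k - 1) / (fact n :: real)" for k
  have img: "card ` Pow F = {0..m}"
  proof
    show "card ` Pow F \<subseteq> {0..m}" using fin c card_mono by fastforce
    show "{0..m} \<subseteq> card ` Pow F"
    proof
      fix k assume "k \<in> {0..m}"
      then obtain T where "T \<subseteq> F" "card T = k" using c fin
        by (metis atLeastAtMost_iff obtain_subset_with_card_n)
      then show "k \<in> card ` Pow F" by auto
    qed
  qed
  have "(\<Sum>S\<in>Pow F. h (card S)) = (\<Sum>k\<in>card ` Pow F. \<Sum>S\<in>{S\<in>Pow F. card S = k}. h (card S))"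
    by (rule sum.image_gen) (simp add: fin)
  also have "\<dots> = (\<Sum>k\<in>{0..m}. real (m choose k) * h k)"
  proof (intro sum.cong, simp add: img)
    fix k
    have "{S\<in>Pow F. card S = k} = {S. S \<subseteq> F \<and> card S = k}" by auto
    then have "card {S\<in>Pow F. card S = k} = m choose k" using n_subsets[OF fin] c by simp
    then show "(\<Sum>S\<in>{S\<in>Pow F. card S = k}. h (card S)) = real (m choose k) * h k"
    proof -
      have "(\<Sum>S\<in>{S\<in>Pow F. card S = k}. h (card S)) = (\<Sum>S\<in>{S\<in>Pow F. card S = k}. h k)"
        by (rule sum.cong) auto
      then show ?thesis using \<open>card {S\<in>Pow F. card S = k} = m choose k\<close> by simp
    qed
  qed
  also have "\<dots> = (\<Sum>k\<in>{0..m}. 1 / real n)"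
  proof (intro sum.cong refl)
    fix k assume "k \<in> {0..m}"
    then have km: "k \<le> m" by simp
    have "real (m choose k) * fact k * fact (m - k) = fact m"
    proof -
      have "real (fact k * fact (m - k) * (m choose k)) = real (fact m)"
        using binomial_fact_lemma[OF km] by (rule arg_cong)
      then show ?thesis by (simp only: of_nat_mult of_nat_fact mult_ac)
    qed
    moreover have "n - k - 1 = m - k" using n by simp
    moreover have "(fact n :: real) = real n * fact m" using n by simp
    ultimately have "real (m choose k) * h k = fact m / (real n * fact m)"
      unfolding h_def by (simp add: mult.assoc)
    also have "\<dots> = 1 / real n" by simp
    finally show "real (m choose k) * h k = 1 / real n" .
  qed
  also have "\<dots> = 1" using n by simp
  finally show ?thesis unfolding h_def .
qed

lemma featvec_restrict: "S \<subseteq> T \<Longrightarrow> featvec X S w = restrict (featvec X T w) S"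
  unfolding featvec_def by (auto simp: restrict_def fun_eq_iff)

theorem mainTheorem4:
  fixes M :: "'w pmf" and n :: nat and X :: "nat \<Rightarrow> 'w \<Rightarrow> 'v" and Y :: "'w \<Rightarrow> 'y"
    and i :: nat
  assumes finX: "\<And>j. j \<in> {1..n} \<Longrightarrow> finite (supp M (X j))"
    and finY: "finite (supp M Y)"
    and nonconst: "\<not> (\<exists>c. AE w in measure_pmf M. Y w = c)"
    and i: "i \<in> {1..n}"
  shows "FI M n X Y i \<in> {0..1}"
proof -
  define F where "F = {1..n} - {i}"
  define w where "w S = fact (card S) * fact (n - card S - 1) / (fact n :: real)" for S :: "nat set"
  have wnn: "w S \<ge> 0" for S unfolding w_def by simp
  have FI: "FI M n X Y i = (\<Sum>S\<in>Pow F. w S * (DepS M X (S \<union> {i}) Y - DepS M X S Y))"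
    unfolding FI_def F_def w_def ..
  have d0: "DepS M X (S \<union> {i}) Y - DepS M X S Y \<ge> 0" if "S \<in> Pow F" for S
  proof -
    have sub: "S \<union> {i} \<subseteq> {1..n}" "S \<subseteq> S \<union> {i}" using that i unfolding F_def by auto
    have "Dep M (featvec X S) Y \<le> Dep M (featvec X (S \<union> {i})) Y"
      by (rule Dep_mono[where f="\<lambda>g. restrict g S", OF finite_featvec[OF sub(1)]])
         (auto intro: finX simp del: Un_insert_right simp add: featvec_restrict[OF sub(2)])
    then show ?thesis unfolding DepS_def by simp
  qed
  have d1: "DepS M X (S \<union> {i}) Y - DepS M X S Y \<le> 1" if "S \<in> Pow F" for S
  proof -
    have sub: "S \<union> {i} \<subseteq> {1..n}" using that i unfolding F_def by auto
    have "Dep M (featvec X (S \<union> {i})) Y \<le> 1"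
      by (rule Dep_le1[OF finite_featvec[OF sub finX] finY])
    moreover have "Dep M (featvec X S) Y \<ge> 0" by (rule Dep_nonneg)
    ultimately show ?thesis unfolding DepS_def by simp
  qed
  have "FI M n X Y i \<ge> 0" unfolding FI
    by (intro sum_nonneg mult_nonneg_nonneg wnn d0)
  moreover have "FI M n X Y i \<le> (\<Sum>S\<in>Pow F. w S * 1)" unfolding FI
    by (intro sum_mono mult_left_mono wnn d1)
  moreover have "(\<Sum>S\<in>Pow F. w S * 1) = 1"
  proof -
    have "finite F" "card F = n - 1" "n = Suc (n - 1)" using i unfolding F_def by auto
    from weights_sum[OF this] show ?thesis unfolding w_def by simp
  qed
  ultimately show ?thesis by simp
qed

end
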